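(* (Discrete inf–sup condition.) There is a constant $\beta>0$, independent of the mesh sizes $h$ and $l$, such that for every admissible discrete displacement $\boldsymbol v=(v^x,v^y)$ $$\sup_{\underline\tau\neq 0}\frac{(D_x\tau^{11}+d_y\tau^{12},v^x)_{TM}+(d_x\tau^{12}+D_y\tau^{22},v^y)_{MT}}{\|\underline\tau\|}\ \ge\ \beta\,\|\boldsymbol v\|,$$ where the supremum is over all nonzero discrete stresses $\underline\tau=(\tau^{11},\tau^{22},\tau^{12})$.
   Context: Let $\Omega=(0,a)\times(0,b)$ with grids $0=x_0<x_1<\dots<x_{n_x}=a$ and $0=y_0<\dots<y_{n_y}=b$. Set $x_{i+1/2}=(x_i+x_{i+1})/2$, $h_{i+1/2}=x_{i+1}-x_i$, $h_i=(h_{i-1/2}+h_{i+1/2})/2$ for $1\le i\le n_x-1$, $h_0=h_{1/2}/2$, $h_{n_x}=h_{n_x-1/2}/2$, $h=\max_i h_{i+1/2}$; analogously $y_{j+1/2}$, $l_{j+1/2}=y_{j+1}-y_j$, $l_j=(l_{j-1/2}+l_{j+1/2})/2$ ($1\le j\le n_y-1$), $l_0=l_{1/2}/2$, $l_{n_y}=l_{n_y-1/2}/2$, $l=\max_j l_{j+1/2}$. For a discrete function $\phi$ write $\phi_{\alpha,\beta}=\phi(x_\alpha,y_\beta)$ ($\alpha,\beta$ integers or half-integers). Difference quotients: $[d_x\phi]_{i+1/2,m}=(\phi_{i+1,m}-\phi_{i,m})/h_{i+1/2}$, $[d_y\phi]_{k,j+1/2}=(\phi_{k,j+1}-\phi_{k,j})/l_{j+1/2}$,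 $[D_x\phi]_{i,m}=(\phi_{i+1/2,m}-\phi_{i-1/2,m})/h_i$ for $1\le i\le n_x-1$, $[D_y\phi]_{k,j}=(\phi_{k,j+1/2}-\phi_{k,j-1/2})/l_j$ for $1\le j\le n_y-1$, and at the boundary $[D_x\phi]_{0,m}=(\phi_{1/2,m}-\phi_{0,m})/h_0$, $[D_x\phi]_{n_x,m}=(\phi_{n_x,m}-\phi_{n_x-1/2,m})/h_{n_x}$, $[D_y\phi]_{k,0}=(\phi_{k,1/2}-\phi_{k,0})/l_0$, $[D_y\phi]_{k,n_y}=(\phi_{k,n_y}-\phi_{k,n_y-1/2})/l_{n_y}$. Discrete inner products: $(\phi,\theta)_M=\sum_{i=0}^{n_x-1}\sum_{j=0}^{n_y-1}h_{i+1/2}l_{j+1/2}\phi_{i+1/2,j+1/2}\theta_{i+1/2,j+1/2}$; $(\phi,\theta)_T=\sum_{i=0}^{n_x}\sum_{j=0}^{n_y}h_il_j\phi_{i,j}\theta_{i,j}$; $(\phi,\theta)_{TM}=\sum_{i=1}^{n_x-1}\sum_{j=0}^{n_y-1}h_il_{j+1/2}\phi_{i,j+1/2}\theta_{i,j+1/2}$; $(\phi,\theta)_{MT}=\sum_{i=0}^{n_x-1}\sum_{j=1}^{n_y-1}h_{i+1/2}l_j\phi_{i+1/2,j}\theta_{i+1/2,j}$; $\|\phi\|_\xi^2=(\phi,\phi)_\xi$. A discrete stress $\underline\tau=(\tau^{11},\tau^{22},\tau^{12})$ consists of $\tau^{11},\tau^{22}$ defined at cell centers $(x_{i+1/2},y_{j+1/2})$,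 $0\le i\le n_x-1$, $0\le j\le n_y-1$, and $\tau^{12}$ defined at nodes $(x_i,y_j)$, $0\le i\le n_x$, $0\le j\le n_y$; $\|\underline\tau\|^2=\|\tau^{11}\|_M^2+\|\tau^{22}\|_M^2+\|\tau^{12}\|_T^2$. An admissible discrete displacement $\boldsymbol v=(v^x,v^y)$ consists of $v^x$ defined at the points $(x_i,y_{j+1/2})$ ($0\le i\le n_x,0\le j\le n_y-1$) and $(x_i,y_0),(x_i,y_{n_y})$ ($0\le i\le n_x$), and $v^y$ defined at $(x_{i+1/2},y_j)$ ($0\le i\le n_x-1,0\le j\le n_y$) and $(x_0,y_j),(x_{n_x},y_j)$ ($0\le j\le n_y$), such that $v^x$ and $v^y$ vanish at all of their points lying on $\partial\Omega$; $\|\boldsymbol v\|^2=\|v^x\|_{TM}^2+\|v^y\|_{MT}^2$. *)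

theory Defs
  imports Complex_Main
begin

definition valid_grid :: "real \<Rightarrow> nat \<Rightarrow> (nat \<Rightarrow> real) \<Rightarrow> bool" where
  "valid_grid a n x \<longleftrightarrow> 1 \<le> n \<and> x 0 = 0 \<and> x n = a \<and> (\<forall>i<n. x i < x (Suc i))"

definition hh :: "(nat \<Rightarrow> real) \<Rightarrow> nat \<Rightarrow> real" where
  "hh x i = x (Suc i) - x i"

text \<open>hn x n i = h_i (dual mesh size at node i)\<close>
definition hn :: "(nat \<Rightarrow> real) \<Rightarrow> nat \<Rightarrow> nat \<Rightarrow> real" where
  "hn x n i = (if i = 0 then hh x 0 / 2
               else if i = n then hh x (n - 1) / 2
               else (hh x (i - 1) + hh x i) / 2)"

type_synonym gridfun = "nat \<Rightarrow> nat \<Rightarrow> real"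

text \<open>Discrete stresses (t11, t22, t12): t11 i j, t22 i j are the values at the cell centre
  (x_{i+1/2}, y_{j+1/2}), i < nx, j < ny; t12 i j is the value at node (x_i, y_j), i \<le> nx, j \<le> ny.\<close>
definition discrete_stresses :: "nat \<Rightarrow> nat \<Rightarrow> (gridfun \<times> gridfun \<times> gridfun) set" where
  "discrete_stresses nx ny = {(t11, t22, t12).
      (\<forall>i j. \<not> (i < nx \<and> j < ny) \<longrightarrow> t11 i j = 0 \<and> t22 i j = 0) \<and>
      (\<forall>i j. \<not> (i \<le> nx \<and> j \<le> ny) \<longrightarrow> t12 i j = 0)}"

definition zero_stress :: "gridfun \<times> gridfun \<times> gridfun" where
  "zero_stress = ((\<lambda>_ _. 0), (\<lambda>_ _. 0), (\<lambda>_ _. 0))"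

text \<open>Admissible discrete displacements (vx, vy): vx i j is the value at (x_i, y_{j+1/2}),
  i \<le> nx, j < ny; vy i j is the value at (x_{i+1/2}, y_j), i < nx, j \<le> ny.
  The values of vx at (x_i,y_0),(x_i,y_ny) and of vy at (x_0,y_j),(x_nx,y_j) lie on the
  boundary and are therefore 0; they are not stored.\<close>
definition admissible_displacements :: "nat \<Rightarrow> nat \<Rightarrow> (gridfun \<times> gridfun) set" where
  "admissible_displacements nx ny = {(vx, vy).
      (\<forall>i j. \<not> (i \<le> nx \<and> j < ny) \<longrightarrow> vx i j = 0) \<and>
      (\<forall>i j. \<not> (i < nx \<and> j \<le> ny) \<longrightarrow> vy i j = 0) \<and>
      (\<forall>j. vx 0 j = 0 \<and> vx nx j = 0) \<and>
      (\<forall>i. vy i 0 = 0 \<and> vy i ny = 0)}"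

definition bform :: "nat \<Rightarrow> nat \<Rightarrow> (nat \<Rightarrow> real) \<Rightarrow> (nat \<Rightarrow> real)
    \<Rightarrow> gridfun \<times> gridfun \<times> gridfun \<Rightarrow> gridfun \<times> gridfun \<Rightarrow> real" where
  "bform nx ny x y \<tau> v = (case \<tau> of (t11, t22, t12) \<Rightarrow> case v of (vx, vy) \<Rightarrow>
     (\<Sum>i\<in>{1..<nx}. \<Sum>j<ny. hn x nx i * hh y j *
        ((t11 i j - t11 (i - 1) j) / hn x nx i + (t12 i (Suc j) - t12 i j) / hh y j) * vx i j)
   + (\<Sum>i<nx. \<Sum>j\<in>{1..<ny}. hh x i * hn y ny j *
        ((t12 (Suc i) j - t12 i j) / hh x i + (t22 i j - t22 i (j - 1)) / hn y ny j) * vy i j))"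

definition stress_norm :: "nat \<Rightarrow> nat \<Rightarrow> (nat \<Rightarrow> real) \<Rightarrow> (nat \<Rightarrow> real)
    \<Rightarrow> gridfun \<times> gridfun \<times> gridfun \<Rightarrow> real" where
  "stress_norm nx ny x y \<tau> = (case \<tau> of (t11, t22, t12) \<Rightarrow>
     sqrt ((\<Sum>i<nx. \<Sum>j<ny. hh x i * hh y j * (t11 i j)\<^sup>2)
         + (\<Sum>i<nx. \<Sum>j<ny. hh x i * hh y j * (t22 i j)\<^sup>2)
         + (\<Sum>i\<le>nx. \<Sum>j\<le>ny. hn x nx i * hn y ny j * (t12 i j)\<^sup>2)))"

definition disp_norm :: "nat \<Rightarrow> nat \<Rightarrow> (nat \<Rightarrow> real) \<Rightarrow> (nat \<Rightarrow> real)
    \<Rightarrow> gridfun \<times> gridfun \<Rightarrow> real" where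
  "disp_norm nx ny x y v = (case v of (vx, vy) \<Rightarrow>
     sqrt ((\<Sum>i\<in>{1..<nx}. \<Sum>j<ny. hn x nx i * hh y j * (vx i j)\<^sup>2)
         + (\<Sum>i<nx. \<Sum>j\<in>{1..<ny}. hh x i * hn y ny j * (vy i j)\<^sup>2)))"

end

theory Submission
  imports Defs
begin

lemma wcs:
  fixes w v :: "nat \<Rightarrow> real"
  assumes "finite A" "\<And>i. i \<in> A \<Longrightarrow> 0 \<le> w i"
  shows "(\<Sum>i\<in>A. w i * v i)\<^sup>2 \<le> (\<Sum>i\<in>A. w i) * (\<Sum>i\<in>A. w i * (v i)\<^sup>2)"
proof -
  have e: "\<And>i j. w i * w j * (v i - v j)\<^sup>2 = (w i * (v i)\<^sup>2) * w j + w i * (w j * (v j)\<^sup>2) - 2 * ((w i * v i) * (w j * v j))"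
    by (simp add: power2_eq_square algebra_simps)
  have "0 \<le> (\<Sum>i\<in>A. \<Sum>j\<in>A. w i * w j * (v i - v j)\<^sup>2)"
    using assms by (intro sum_nonneg) simp
  also have "\<dots> = (\<Sum>i\<in>A. \<Sum>j\<in>A. (w i * (v i)\<^sup>2) * w j) + (\<Sum>i\<in>A. \<Sum>j\<in>A. w i * (w j * (v j)\<^sup>2)) - 2 * (\<Sum>i\<in>A. \<Sum>j\<in>A. (w i * v i) * (w j * v j))"
    unfolding e by (simp add: sum.distrib sum_subtractf sum_distrib_left)
  also have "\<dots> = 2*((\<Sum>i\<in>A. w i) * (\<Sum>i\<in>A. w i * (v i)\<^sup>2)) - 2*(\<Sum>i\<in>A. w i * v i)\<^sup>2"
    by (simp add: sum_product[symmetric] power2_eq_square)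
  finally show ?thesis by simp
qed


definition mmin :: "(nat \<Rightarrow> real) \<Rightarrow> nat \<Rightarrow> real" where
  "mmin x n = Min (hh x ` {..<n}) / 2"

lemma hh_pos: "valid_grid a n x \<Longrightarrow> i < n \<Longrightarrow> 0 < hh x i"
  by (simp add: valid_grid_def hh_def)

lemma mmin_pos: assumes "valid_grid a n x" shows "0 < mmin x n"
proof -
  have "n \<ge> 1" using assms by (simp add: valid_grid_def)
  then have "Min (hh x ` {..<n}) \<in> hh x ` {..<n}" by (intro Min_in) (auto simp: lessThan_empty_iff)
  then show ?thesis using hh_pos[OF assms] unfolding mmin_def by auto
qed

lemma mmin_le_hh: assumes "valid_grid a n x" "i < n" shows "mmin x n \<le> hh x i"
proof -
  have "Min (hh x ` {..<n}) \<le> hh x i" using assms(2) by (intro Min_le) auto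
  moreover have "0 < hh x i" using hh_pos[OF assms] .
  ultimately show ?thesis unfolding mmin_def by simp
qed

lemma mmin_le_hn: assumes "valid_grid a n x" "i \<le> n" shows "mmin x n \<le> hn x n i"
proof -
  have n1: "n \<ge> 1" using assms by (simp add: valid_grid_def)
  have m0: "0 < mmin x n" using mmin_pos[OF assms(1)] .
  have A: "\<And>k. k < n \<Longrightarrow> Min (hh x ` {..<n}) \<le> hh x k" by (intro Min_le) auto
  show ?thesis
  proof (cases "i = 0")
    case True then show ?thesis using A[of 0] n1 unfolding mmin_def hn_def by simp
  next
    case False
    show ?thesis
    proof (cases "i = n")
      case True then show ?thesis using A[of "n-1"] n1 False unfolding mmin_def hn_def by simp
    next
      case F2: False
      then have "i < n" "i - 1 < n" using assms(2) by auto
      moreover have "0 < hh x (i - 1)" using hh_pos[OF assms(1)] \<open>i - 1 < n\<close> by simp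
      moreover have "Min (hh x ` {..<n}) \<le> hh x i" using A \<open>i < n\<close> by blast
      ultimately have "Min (hh x ` {..<n}) \<le> hh x (i - 1) + hh x i" by linarith
      then have "Min (hh x ` {..<n}) / 2 \<le> (hh x (i - 1) + hh x i) / 2" by (rule divide_right_mono) simp
      then show ?thesis using False F2 unfolding mmin_def hn_def by simp
    qed
  qed
qed

lemma hn_pos: "valid_grid a n x \<Longrightarrow> i \<le> n \<Longrightarrow> 0 < hn x n i"
  using mmin_le_hn mmin_pos by (meson less_le_trans)

lemma sum_hh: assumes "valid_grid a n x" shows "(\<Sum>i<n. hh x i) = a"
  using assms unfolding valid_grid_def hh_def by (simp add: sum_lessThan_telescope)

lemma sum_hn_le: assumes "valid_grid a n x" shows "(\<Sum>i\<in>{1..<n}. hn x n i) \<le> a"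
proof -
  have "(\<Sum>i\<in>{1..<n}. hn x n i) = (\<Sum>i\<in>{1..<n}. hh x (i - 1) / 2 + hh x i / 2)"
    by (intro sum.cong) (auto simp: hn_def)
  also have "\<dots> = (\<Sum>i\<in>{1..<n}. hh x (i - 1)) / 2 + (\<Sum>i\<in>{1..<n}. hh x i) / 2"
    by (simp add: sum.distrib sum_divide_distrib)
  also have "(\<Sum>i\<in>{1..<n}. hh x (i - 1)) = (\<Sum>i\<in>{0..<n-1}. hh x i)"
  proof (cases n)
    case 0 then show ?thesis by simp
  next
    case (Suc m)
    then show ?thesis using sum.shift_bounds_nat_ivl[of "\<lambda>i. hh x (i - 1)" 0 1 m] by simp
  qed
  also have "(\<Sum>i\<in>{0..<n-1}. hh x i) \<le> (\<Sum>i<n. hh x i)"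
    using hh_pos[OF assms] by (intro sum_mono2) (auto intro: less_imp_le)
  also have "(\<Sum>i\<in>{1..<n}. hh x i) \<le> (\<Sum>i<n. hh x i)"
    using hh_pos[OF assms] by (intro sum_mono2) (auto intro: less_imp_le)
  finally show ?thesis using sum_hh[OF assms] by simp
qed


lemma dsum_ge:
  fixes f :: "nat \<Rightarrow> nat \<Rightarrow> real"
  assumes "finite A" "finite B" "\<And>i j. i \<in> A \<Longrightarrow> j \<in> B \<Longrightarrow> 0 \<le> f i j" "i \<in> A" "j \<in> B"
  shows "f i j \<le> (\<Sum>i\<in>A. \<Sum>j\<in>B. f i j)"
proof -
  have "f i j \<le> (\<Sum>j\<in>B. f i j)" using assms by (intro member_le_sum) auto
  also have "\<dots> \<le> (\<Sum>i\<in>A. \<Sum>j\<in>B. f i j)" using assms by (intro member_le_sum sum_nonneg) auto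
  finally show ?thesis .
qed

lemma abs_le_from_weighted:
  fixes t Q m w :: real
  assumes "0 < m" "m \<le> w" "w * t\<^sup>2 \<le> Q"
  shows "\<bar>t\<bar> \<le> sqrt Q / sqrt m"
proof -
  have "m * t\<^sup>2 \<le> w * t\<^sup>2" using assms by (intro mult_right_mono) auto
  then have "t\<^sup>2 \<le> Q / m" using assms by (simp add: field_simps)
  then have "sqrt (t\<^sup>2) \<le> sqrt (Q / m)" by (rule real_sqrt_le_mono)
  then show ?thesis by (simp add: real_sqrt_divide)
qed

definition QQ :: "nat \<Rightarrow> nat \<Rightarrow> (nat \<Rightarrow> real) \<Rightarrow> (nat \<Rightarrow> real) \<Rightarrow> gridfun \<Rightarrow> gridfun \<Rightarrow> gridfun \<Rightarrow> real" where
  "QQ nx ny x y t11 t22 t12 = (\<Sum>i<nx. \<Sum>j<ny. hh x i * hh y j * (t11 i j)\<^sup>2)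
         + (\<Sum>i<nx. \<Sum>j<ny. hh x i * hh y j * (t22 i j)\<^sup>2)
         + (\<Sum>i\<le>nx. \<Sum>j\<le>ny. hn x nx i * hn y ny j * (t12 i j)\<^sup>2)"

lemma stress_norm_QQ: "stress_norm nx ny x y (t11, t22, t12) = sqrt (QQ nx ny x y t11 t22 t12)"
  by (simp add: stress_norm_def QQ_def)

lemma comp_bound:
  assumes gx: "valid_grid a nx x" and gy: "valid_grid b ny y"
    and ds: "(t11, t22, t12) \<in> discrete_stresses nx ny"
  defines "M \<equiv> stress_norm nx ny x y (t11, t22, t12) / sqrt (mmin x nx * mmin y ny)"
  shows "\<bar>t11 i j\<bar> \<le> M" "\<bar>t22 i j\<bar> \<le> M" "\<bar>t12 i j\<bar> \<le> M"
proof -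
  have m0: "0 < mmin x nx * mmin y ny" using mmin_pos[OF gx] mmin_pos[OF gy] by simp
  have hx: "\<And>i. i < nx \<Longrightarrow> 0 \<le> hh x i" using hh_pos[OF gx] less_imp_le by blast
  have hy: "\<And>i. i < ny \<Longrightarrow> 0 \<le> hh y i" using hh_pos[OF gy] less_imp_le by blast
  have nx: "\<And>i. i \<le> nx \<Longrightarrow> 0 \<le> hn x nx i" using hn_pos[OF gx] less_imp_le by blast
  have ny: "\<And>i. i \<le> ny \<Longrightarrow> 0 \<le> hn y ny i" using hn_pos[OF gy] less_imp_le by blast
  let ?S1 = "(\<Sum>i<nx. \<Sum>j<ny. hh x i * hh y j * (t11 i j)\<^sup>2)"
  let ?S2 = "(\<Sum>i<nx. \<Sum>j<ny. hh x i * hh y j * (t22 i j)\<^sup>2)"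
  let ?S3 = "(\<Sum>i\<le>nx. \<Sum>j\<le>ny. hn x nx i * hn y ny j * (t12 i j)\<^sup>2)"
  have p1: "0 \<le> ?S1" using hx hy
    by (intro sum_nonneg) (auto intro!: mult_nonneg_nonneg)
  have p2: "0 \<le> ?S2" using hx hy
    by (intro sum_nonneg) (auto intro!: mult_nonneg_nonneg)
  have p3: "0 \<le> ?S3" using nx ny
    by (intro sum_nonneg) (auto intro!: mult_nonneg_nonneg)
  have Q: "QQ nx ny x y t11 t22 t12 = ?S1 + ?S2 + ?S3" by (simp add: QQ_def)
  have Meq: "M = sqrt (QQ nx ny x y t11 t22 t12) / sqrt (mmin x nx * mmin y ny)"
    unfolding M_def stress_norm_QQ ..
  have M0: "0 \<le> M" unfolding Meq using p1 p2 p3 m0 Q by simp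
  show "\<bar>t11 i j\<bar> \<le> M"
  proof (cases "i < nx \<and> j < ny")
    case True
    have "hh x i * hh y j * (t11 i j)\<^sup>2 \<le> ?S1" using True hx hy
      by (intro dsum_ge[where f="\<lambda>i j. hh x i * hh y j * (t11 i j)\<^sup>2"]) (auto intro!: mult_nonneg_nonneg)
    then have "hh x i * hh y j * (t11 i j)\<^sup>2 \<le> QQ nx ny x y t11 t22 t12" using Q p2 p3 by linarith
    moreover have "mmin x nx * mmin y ny \<le> hh x i * hh y j"
      using True mmin_le_hh[OF gx] mmin_le_hh[OF gy] mmin_pos[OF gx] mmin_pos[OF gy] hx hy nx ny
      by (intro mult_mono) (auto intro: less_imp_le)
    ultimately show ?thesis unfolding Meq using m0 by (intro abs_le_from_weighted) auto
  next
    case False then show ?thesis using ds M0 by (auto simp: discrete_stresses_def)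
  qed
  show "\<bar>t22 i j\<bar> \<le> M"
  proof (cases "i < nx \<and> j < ny")
    case True
    have "hh x i * hh y j * (t22 i j)\<^sup>2 \<le> ?S2" using True hx hy
      by (intro dsum_ge[where f="\<lambda>i j. hh x i * hh y j * (t22 i j)\<^sup>2"]) (auto intro!: mult_nonneg_nonneg)
    then have "hh x i * hh y j * (t22 i j)\<^sup>2 \<le> QQ nx ny x y t11 t22 t12" using Q p1 p3 by linarith
    moreover have "mmin x nx * mmin y ny \<le> hh x i * hh y j"
      using True mmin_le_hh[OF gx] mmin_le_hh[OF gy] mmin_pos[OF gx] mmin_pos[OF gy] hx hy nx ny
      by (intro mult_mono) (auto intro: less_imp_le)
    ultimately show ?thesis unfolding Meq using m0 by (intro abs_le_from_weighted) auto
  next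
    case False then show ?thesis using ds M0 by (auto simp: discrete_stresses_def)
  qed
  show "\<bar>t12 i j\<bar> \<le> M"
  proof (cases "i \<le> nx \<and> j \<le> ny")
    case True
    have "hn x nx i * hn y ny j * (t12 i j)\<^sup>2 \<le> ?S3" using True nx ny
      by (intro dsum_ge[where f="\<lambda>i j. hn x nx i * hn y ny j * (t12 i j)\<^sup>2"]) (auto intro!: mult_nonneg_nonneg)
    then have "hn x nx i * hn y ny j * (t12 i j)\<^sup>2 \<le> QQ nx ny x y t11 t22 t12" using Q p1 p2 by linarith
    moreover have "mmin x nx * mmin y ny \<le> hn x nx i * hn y ny j"
      using True mmin_le_hn[OF gx] mmin_le_hn[OF gy] mmin_pos[OF gx] mmin_pos[OF gy] hx hy nx ny
      by (intro mult_mono) (auto intro: less_imp_le)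
    ultimately show ?thesis unfolding Meq using m0 by (intro abs_le_from_weighted) auto
  next
    case False then show ?thesis using ds M0 by (auto simp: discrete_stresses_def)
  qed
qed

lemma term_bound:
  fixes p q t1 t2 s1 s2 v M :: real
  assumes "0 < p" "0 < q" "\<bar>t1\<bar> \<le> M" "\<bar>t2\<bar> \<le> M" "\<bar>s1\<bar> \<le> M" "\<bar>s2\<bar> \<le> M"
  shows "\<bar>p * q * ((t1 - t2) / p + (s1 - s2) / q) * v\<bar> \<le> 2 * (p + q) * \<bar>v\<bar> * M"
proof -
  have e: "p * q * ((t1 - t2) / p + (s1 - s2) / q) = q * (t1 - t2) + p * (s1 - s2)"
    using assms by (simp add: field_simps)
  have "\<bar>q * (t1 - t2) + p * (s1 - s2)\<bar> \<le> q * (2*M) + p * (2*M)"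
  proof -
    have "\<bar>t1 - t2\<bar> \<le> 2*M" "\<bar>s1 - s2\<bar> \<le> 2*M" using assms by linarith+
    then have "q * \<bar>t1 - t2\<bar> \<le> q * (2*M)" "p * \<bar>s1 - s2\<bar> \<le> p * (2*M)"
      using assms by (auto intro!: mult_left_mono)
    then have "\<bar>q * (t1 - t2)\<bar> \<le> q * (2*M)" "\<bar>p * (s1 - s2)\<bar> \<le> p * (2*M)"
      using assms by (simp_all add: abs_mult)
    then show ?thesis using abs_triangle_ineq[of "q*(t1-t2)" "p*(s1-s2)"] by linarith
  qed
  then have "\<bar>q * (t1 - t2) + p * (s1 - s2)\<bar> * \<bar>v\<bar> \<le> (q * (2*M) + p * (2*M)) * \<bar>v\<bar>"
    by (intro mult_right_mono) auto
  also have "\<dots> = 2 * (p + q) * \<bar>v\<bar> * M" by (simp add: algebra_simps)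
  finally show ?thesis by (simp only: e abs_mult)
qed



definition Kv :: "nat \<Rightarrow> nat \<Rightarrow> (nat \<Rightarrow> real) \<Rightarrow> (nat \<Rightarrow> real) \<Rightarrow> gridfun \<Rightarrow> gridfun \<Rightarrow> real" where
  "Kv nx ny x y vx vy = (\<Sum>i\<in>{1..<nx}. \<Sum>j<ny. 2 * (hn x nx i + hh y j) * \<bar>vx i j\<bar>)
     + (\<Sum>i<nx. \<Sum>j\<in>{1..<ny}. 2 * (hh x i + hn y ny j) * \<bar>vy i j\<bar>)"

lemma bform_bound:
  assumes gx: "valid_grid a nx x" and gy: "valid_grid b ny y"
    and ds: "(t11, t22, t12) \<in> discrete_stresses nx ny"
  defines "M \<equiv> stress_norm nx ny x y (t11, t22, t12) / sqrt (mmin x nx * mmin y ny)"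
  shows "\<bar>bform nx ny x y (t11, t22, t12) (vx, vy)\<bar> \<le> Kv nx ny x y vx vy * M"
proof -
  note cb = comp_bound[OF gx gy ds, folded M_def]
  let ?A = "(\<Sum>i\<in>{1..<nx}. \<Sum>j<ny. hn x nx i * hh y j *
        ((t11 i j - t11 (i - 1) j) / hn x nx i + (t12 i (Suc j) - t12 i j) / hh y j) * vx i j)"
  let ?B = "(\<Sum>i<nx. \<Sum>j\<in>{1..<ny}. hh x i * hn y ny j *
        ((t12 (Suc i) j - t12 i j) / hh x i + (t22 i j - t22 i (j - 1)) / hn y ny j) * vy i j)"
  have "\<bar>?A\<bar> \<le> (\<Sum>i\<in>{1..<nx}. \<Sum>j<ny. 2 * (hn x nx i + hh y j) * \<bar>vx i j\<bar> * M)"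
  proof -
    have "\<bar>?A\<bar> \<le> (\<Sum>i\<in>{1..<nx}. \<bar>\<Sum>j<ny. hn x nx i * hh y j *
        ((t11 i j - t11 (i - 1) j) / hn x nx i + (t12 i (Suc j) - t12 i j) / hh y j) * vx i j\<bar>)"
      by (rule sum_abs)
    also have "\<dots> \<le> (\<Sum>i\<in>{1..<nx}. \<Sum>j<ny. 2 * (hn x nx i + hh y j) * \<bar>vx i j\<bar> * M)"
    proof (intro sum_mono)
      fix i assume i: "i \<in> {1..<nx}"
      show "\<bar>\<Sum>j<ny. hn x nx i * hh y j *
        ((t11 i j - t11 (i - 1) j) / hn x nx i + (t12 i (Suc j) - t12 i j) / hh y j) * vx i j\<bar>
        \<le> (\<Sum>j<ny. 2 * (hn x nx i + hh y j) * \<bar>vx i j\<bar> * M)"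
        using i by (intro order_trans[OF sum_abs] sum_mono term_bound cb hn_pos[OF gx] hh_pos[OF gy]) auto
    qed
    finally show ?thesis .
  qed
  moreover have "\<bar>?B\<bar> \<le> (\<Sum>i<nx. \<Sum>j\<in>{1..<ny}. 2 * (hh x i + hn y ny j) * \<bar>vy i j\<bar> * M)"
  proof -
    have "\<bar>?B\<bar> \<le> (\<Sum>i<nx. \<bar>\<Sum>j\<in>{1..<ny}. hh x i * hn y ny j *
        ((t12 (Suc i) j - t12 i j) / hh x i + (t22 i j - t22 i (j - 1)) / hn y ny j) * vy i j\<bar>)"
      by (rule sum_abs)
    also have "\<dots> \<le> (\<Sum>i<nx. \<Sum>j\<in>{1..<ny}. 2 * (hh x i + hn y ny j) * \<bar>vy i j\<bar> * M)"
    proof (intro sum_mono)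
      fix i assume i: "i \<in> {..<nx}"
      show "\<bar>\<Sum>j\<in>{1..<ny}. hh x i * hn y ny j *
        ((t12 (Suc i) j - t12 i j) / hh x i + (t22 i j - t22 i (j - 1)) / hn y ny j) * vy i j\<bar>
        \<le> (\<Sum>j\<in>{1..<ny}. 2 * (hh x i + hn y ny j) * \<bar>vy i j\<bar> * M)"
        using i by (intro order_trans[OF sum_abs] sum_mono term_bound cb hn_pos[OF gy] hh_pos[OF gx]) auto
    qed
    finally show ?thesis .
  qed
  ultimately have "\<bar>?A + ?B\<bar> \<le> (\<Sum>i\<in>{1..<nx}. \<Sum>j<ny. 2 * (hn x nx i + hh y j) * \<bar>vx i j\<bar> * M)
     + (\<Sum>i<nx. \<Sum>j\<in>{1..<ny}. 2 * (hh x i + hn y ny j) * \<bar>vy i j\<bar> * M)"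
    using abs_triangle_ineq[of ?A ?B] by linarith
  also have "\<dots> = Kv nx ny x y vx vy * M"
    by (simp add: Kv_def sum_distrib_right distrib_right)
  finally show ?thesis by (simp add: bform_def)
qed



lemma sum_Suc_top: "(i::nat) \<ge> 1 \<Longrightarrow> (\<Sum>k\<in>{1..i}. f k) = (\<Sum>k\<in>{1..i-1}. f k) + (f i :: real)"
  by (cases i) (auto simp: sum.cl_ivl_Suc)

lemma t_sq_bound:
  assumes g: "valid_grid a n x" and i: "i < n"
  shows "(\<Sum>k\<in>{1..i}. hn x n k * v k)\<^sup>2 \<le> a * (\<Sum>k\<in>{1..<n}. hn x n k * (v k)\<^sup>2)"
proof -
  have hp: "\<And>k. k \<le> n \<Longrightarrow> 0 \<le> hn x n k" using hn_pos[OF g] less_imp_le by blast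
  have sub: "{1..i} \<subseteq> {1..<n}" using i by auto
  have "(\<Sum>k\<in>{1..i}. hn x n k * v k)\<^sup>2 \<le> (\<Sum>k\<in>{1..i}. hn x n k) * (\<Sum>k\<in>{1..i}. hn x n k * (v k)\<^sup>2)"
    using i hp by (intro wcs) auto
  also have "\<dots> \<le> a * (\<Sum>k\<in>{1..<n}. hn x n k * (v k)\<^sup>2)"
  proof (rule mult_mono)
    have "(\<Sum>k\<in>{1..i}. hn x n k) \<le> (\<Sum>k\<in>{1..<n}. hn x n k)"
      using hp by (intro sum_mono2[OF _ sub]) auto
    then show "(\<Sum>k\<in>{1..i}. hn x n k) \<le> a" using sum_hn_le[OF g] by linarith
    show "(\<Sum>k\<in>{1..i}. hn x n k * (v k)\<^sup>2) \<le> (\<Sum>k\<in>{1..<n}. hn x n k * (v k)\<^sup>2)"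
      using hp by (intro sum_mono2[OF _ sub]) auto
    have "\<And>k. k < n \<Longrightarrow> 0 \<le> hh x k" using hh_pos[OF g] less_imp_le by blast
    then have "0 \<le> (\<Sum>k<n. hh x k)" by (intro sum_nonneg) auto
    then show "0 \<le> a" using sum_hh[OF g] by simp
    show "0 \<le> (\<Sum>k\<in>{1..i}. hn x n k * (v k)\<^sup>2)" using hp i by (intro sum_nonneg) auto
  qed
  finally show ?thesis .
qed



lemma QQ_nonneg:
  assumes gx: "valid_grid a nx x" and gy: "valid_grid b ny y"
  shows "0 \<le> QQ nx ny x y t11 t22 t12"
proof -
  have hx: "\<And>i. i < nx \<Longrightarrow> 0 \<le> hh x i" using hh_pos[OF gx] less_imp_le by blast
  have hy: "\<And>i. i < ny \<Longrightarrow> 0 \<le> hh y i" using hh_pos[OF gy] less_imp_le by blast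
  have nx: "\<And>i. i \<le> nx \<Longrightarrow> 0 \<le> hn x nx i" using hn_pos[OF gx] less_imp_le by blast
  have ny: "\<And>i. i \<le> ny \<Longrightarrow> 0 \<le> hn y ny i" using hn_pos[OF gy] less_imp_le by blast
  show ?thesis unfolding QQ_def using hx hy nx ny
    by (intro add_nonneg_nonneg sum_nonneg mult_nonneg_nonneg) auto
qed

lemma sn_nonneg:
  assumes gx: "valid_grid a nx x" and gy: "valid_grid b ny y"
  shows "0 \<le> stress_norm nx ny x y \<tau>"
  using QQ_nonneg[OF gx gy] by (cases \<tau>) (simp add: stress_norm_QQ)

lemma grid_pos: assumes g: "valid_grid a n x" shows "0 < a"
proof -
  have n: "0 < n" using g by (simp add: valid_grid_def)
  have hx: "\<And>i. i < n \<Longrightarrow> 0 \<le> hh x i" using hh_pos[OF g] less_imp_le by blast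
  have "hh x 0 \<le> (\<Sum>i<n. hh x i)" using n hx by (intro member_le_sum) auto
  then show ?thesis using sum_hh[OF g] hh_pos[OF g n] by linarith
qed

lemma main_fixed:
  assumes gx: "valid_grid a nx x" and gy: "valid_grid b ny y"
    and adm: "(vx, vy) \<in> admissible_displacements nx ny"
  shows "(SUP \<tau>\<in>discrete_stresses nx ny - {zero_stress}.
              bform nx ny x y \<tau> (vx, vy) / stress_norm nx ny x y \<tau>)
             \<ge> (1 / max a b) * disp_norm nx ny x y (vx, vy)"
proof -
  let ?T = "discrete_stresses nx ny - {zero_stress}"
  let ?f = "\<lambda>\<tau>. bform nx ny x y \<tau> (vx, vy) / stress_norm nx ny x y \<tau>"
  define m where "m = mmin x nx * mmin y ny"
  have m0: "0 < m" unfolding m_def using mmin_pos[OF gx] mmin_pos[OF gy] by simp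
  define K where "K = Kv nx ny x y vx vy / sqrt m"
  have K0: "0 \<le> K" unfolding K_def Kv_def using m0
    by (intro divide_nonneg_nonneg add_nonneg_nonneg sum_nonneg mult_nonneg_nonneg)
       (auto intro!: add_nonneg_nonneg less_imp_le hn_pos[OF gx] hn_pos[OF gy] hh_pos[OF gx] hh_pos[OF gy])
  have bb: "\<bar>bform nx ny x y \<tau> (vx, vy)\<bar> \<le> K * stress_norm nx ny x y \<tau>"
    if "\<tau> \<in> discrete_stresses nx ny" for \<tau>
  proof -
    obtain t11 t22 t12 where t: "\<tau> = (t11, t22, t12)" by (cases \<tau>) auto
    show ?thesis using bform_bound[OF gx gy that[unfolded t], of vx vy] unfolding t K_def m_def
      by simp
  qed
  have bdd: "bdd_above (?f ` ?T)"
  proof (rule bdd_aboveI2)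
    fix \<tau> assume "\<tau> \<in> ?T"
    then have b: "\<bar>bform nx ny x y \<tau> (vx, vy)\<bar> \<le> K * stress_norm nx ny x y \<tau>" using bb by auto
    have sn: "0 \<le> stress_norm nx ny x y \<tau>" by (rule sn_nonneg[OF gx gy])
    show "?f \<tau> \<le> K"
    proof (cases "stress_norm nx ny x y \<tau> = 0")
      case True then show ?thesis using K0 by simp
    next
      case False
      then have "0 < stress_norm nx ny x y \<tau>" using sn by simp
      then show ?thesis using b by (simp add: divide_le_eq)
    qed
  qed
  have sup_ge: "?f \<tau> \<le> (SUP \<tau>\<in>?T. ?f \<tau>)" if "\<tau> \<in> ?T" for \<tau>
    using cSUP_upper[OF that bdd] .
  define Px where "Px = (\<Sum>i\<in>{1..<nx}. \<Sum>j<ny. hn x nx i * hh y j * (vx i j)\<^sup>2)"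
  define Py where "Py = (\<Sum>i<nx. \<Sum>j\<in>{1..<ny}. hh x i * hn y ny j * (vy i j)\<^sup>2)"
  have Px0: "0 \<le> Px" unfolding Px_def
    by (intro sum_nonneg mult_nonneg_nonneg) (auto intro!: less_imp_le hn_pos[OF gx] hh_pos[OF gy])
  have Py0: "0 \<le> Py" unfolding Py_def
    by (intro sum_nonneg mult_nonneg_nonneg) (auto intro!: less_imp_le hn_pos[OF gy] hh_pos[OF gx])
  have D: "disp_norm nx ny x y (vx, vy) = sqrt (Px + Py)" by (simp add: disp_norm_def Px_def Py_def)
  show ?thesis
  proof (cases "Px + Py = 0")
    case True
    define \<tau>0 :: "gridfun \<times> gridfun \<times> gridfun" where "\<tau>0 = ((\<lambda>_ _. 0::real), (\<lambda>_ _. 0::real), (\<lambda>i j. if i = 0 \<and> j = 0 then 1 else (0::real)))"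
    have "\<tau>0 \<in> ?T" unfolding \<tau>0_def zero_stress_def discrete_stresses_def
      by (auto simp: fun_eq_iff)
    moreover have "bform nx ny x y \<tau>0 (vx, vy) = 0"
    proof -
      have "bform nx ny x y \<tau>0 (vx, vy) = 0 + 0" unfolding \<tau>0_def bform_def prod.case
        by (intro arg_cong2[where f="(+)"] sum.neutral ballI) auto
      then show ?thesis by simp
    qed
    then have "?f \<tau>0 = 0" by simp
    ultimately have "0 \<le> (SUP \<tau>\<in>?T. ?f \<tau>)" using sup_ge by fastforce
    then show ?thesis using True D by simp
  next
    case False
    then have P0: "0 < Px + Py" using Px0 Py0 by linarith
    define t11 where "t11 = (\<lambda>i j. if i < nx \<and> j < ny then \<Sum>k\<in>{1..i}. hn x nx k * vx k j else 0)"
    define t22 where "t22 = (\<lambda>i j. if i < nx \<and> j < ny then \<Sum>k\<in>{1..j}. hn y ny k * vy i k else 0)"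
    define t12 where "t12 = (\<lambda>(i::nat) (j::nat). 0::real)"
    have ds: "(t11, t22, t12) \<in> discrete_stresses nx ny"
      unfolding discrete_stresses_def t11_def t22_def t12_def by auto
    have bf: "bform nx ny x y (t11, t22, t12) (vx, vy) = Px + Py"
      unfolding bform_def prod.case Px_def Py_def
    proof (intro arg_cong2[where f="(+)"] sum.cong refl)
      fix i j assume i: "i \<in> {1..<nx}" and j: "j \<in> {..<ny}"
      have st: "(\<Sum>k\<in>{1..i}. hn x nx k * vx k j) = (\<Sum>k\<in>{1..i-1}. hn x nx k * vx k j) + hn x nx i * vx i j"
        using i by (intro sum_Suc_top) auto
      have "t11 i j - t11 (i - 1) j = hn x nx i * vx i j"
        using i j unfolding t11_def st by auto
      moreover have "0 < hn x nx i" using i by (intro hn_pos[OF gx]) auto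
      ultimately show "hn x nx i * hh y j * ((t11 i j - t11 (i - 1) j) / hn x nx i + (t12 i (Suc j) - t12 i j) / hh y j) * vx i j
         = hn x nx i * hh y j * (vx i j)\<^sup>2"
        by (simp add: t12_def power2_eq_square)
    next
      fix i j assume i: "i \<in> {..<nx}" and j: "j \<in> {1..<ny}"
      have st: "(\<Sum>k\<in>{1..j}. hn y ny k * vy i k) = (\<Sum>k\<in>{1..j-1}. hn y ny k * vy i k) + hn y ny j * vy i j"
        using j by (intro sum_Suc_top) auto
      have "t22 i j - t22 i (j - 1) = hn y ny j * vy i j"
        using i j unfolding t22_def st by auto
      moreover have "0 < hn y ny j" using j by (intro hn_pos[OF gy]) auto
      ultimately show "hh x i * hn y ny j * ((t12 (Suc i) j - t12 i j) / hh x i + (t22 i j - t22 i (j - 1)) / hn y ny j) * vy i j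
         = hh x i * hn y ny j * (vy i j)\<^sup>2"
        by (simp add: t12_def power2_eq_square)
    qed
    have hx: "\<And>i. i < nx \<Longrightarrow> 0 \<le> hh x i" using hh_pos[OF gx] less_imp_le by blast
    have hy: "\<And>i. i < ny \<Longrightarrow> 0 \<le> hh y i" using hh_pos[OF gy] less_imp_le by blast
    define R where "R = (\<lambda>j. \<Sum>k\<in>{1..<nx}. hn x nx k * (vx k j)\<^sup>2)"
    define R' where "R' = (\<lambda>i. \<Sum>k\<in>{1..<ny}. hn y ny k * (vy i k)\<^sup>2)"
    have S1: "(\<Sum>i<nx. \<Sum>j<ny. hh x i * hh y j * (t11 i j)\<^sup>2) \<le> a\<^sup>2 * Px"
    proof -
      have "(\<Sum>i<nx. \<Sum>j<ny. hh x i * hh y j * (t11 i j)\<^sup>2) \<le> (\<Sum>i<nx. \<Sum>j<ny. hh x i * hh y j * (a * R j))"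
      proof (intro sum_mono mult_left_mono)
        fix i j assume i: "i \<in> {..<nx}" and j: "j \<in> {..<ny}"
        show "(t11 i j)\<^sup>2 \<le> a * R j" using i j t_sq_bound[OF gx, of i "\<lambda>k. vx k j"]
          by (simp add: t11_def R_def)
        show "0 \<le> hh x i * hh y j" using i j hx hy by simp
      qed
      also have "\<dots> = (\<Sum>i<nx. hh x i) * (\<Sum>j<ny. hh y j * (a * R j))"
        by (simp add: sum_product mult.assoc)
      also have "(\<Sum>j<ny. hh y j * (a * R j)) = a * Px"
        unfolding Px_def R_def
        by (subst sum.swap) (simp add: sum_distrib_left mult_ac)
      finally show ?thesis using sum_hh[OF gx] by (simp add: power2_eq_square)
    qed
    have S2: "(\<Sum>i<nx. \<Sum>j<ny. hh x i * hh y j * (t22 i j)\<^sup>2) \<le> b\<^sup>2 * Py"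
    proof -
      have "(\<Sum>i<nx. \<Sum>j<ny. hh x i * hh y j * (t22 i j)\<^sup>2) \<le> (\<Sum>i<nx. \<Sum>j<ny. hh x i * hh y j * (b * R' i))"
      proof (intro sum_mono mult_left_mono)
        fix i j assume i: "i \<in> {..<nx}" and j: "j \<in> {..<ny}"
        show "(t22 i j)\<^sup>2 \<le> b * R' i" using i j t_sq_bound[OF gy, of j "\<lambda>k. vy i k"]
          by (simp add: t22_def R'_def)
        show "0 \<le> hh x i * hh y j" using i j hx hy by simp
      qed
      also have "\<dots> = (\<Sum>i<nx. hh x i * (b * R' i)) * (\<Sum>j<ny. hh y j)"
        by (simp add: sum_distrib_left sum_distrib_right mult_ac)
      also have "(\<Sum>i<nx. hh x i * (b * R' i)) = b * Py"
        unfolding Py_def R'_def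
        by (simp add: sum_distrib_left mult_ac)
      finally show ?thesis using sum_hh[OF gy] by (simp add: power2_eq_square mult_ac)
    qed
    have "QQ nx ny x y t11 t22 t12 \<le> a\<^sup>2 * Px + b\<^sup>2 * Py"
      using S1 S2 by (simp add: QQ_def t12_def)
    also have "\<dots> \<le> (max a b)\<^sup>2 * Px + (max a b)\<^sup>2 * Py"
      using grid_pos[OF gx] grid_pos[OF gy] Px0 Py0
      by (intro add_mono mult_right_mono power_mono) auto
    finally have Q: "QQ nx ny x y t11 t22 t12 \<le> (max a b)\<^sup>2 * (Px + Py)"
      by (simp add: distrib_left)
    have ab: "0 < max a b" using grid_pos[OF gx] by simp
    let ?S = "stress_norm nx ny x y (t11, t22, t12)"
    have S_le: "?S \<le> max a b * sqrt (Px + Py)"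
    proof -
      have "?S \<le> sqrt ((max a b)\<^sup>2 * (Px + Py))" unfolding stress_norm_QQ
        using Q by (rule real_sqrt_le_mono)
      also have "\<dots> = max a b * sqrt (Px + Py)" using ab by (simp add: real_sqrt_mult)
      finally show ?thesis .
    qed
    have S_pos: "0 < ?S"
    proof -
      have "Px + Py \<le> K * ?S" using bb[OF ds] bf by simp
      moreover have "0 \<le> ?S" by (rule sn_nonneg[OF gx gy])
      ultimately show ?thesis using P0 by (cases "?S = 0") auto
    qed
    have "(t11, t22, t12) \<noteq> zero_stress" using S_pos
      by (auto simp: zero_stress_def stress_norm_def)
    with ds have inT: "(t11, t22, t12) \<in> ?T" by simp
    have "(1 / max a b) * sqrt (Px + Py) = (Px + Py) / (max a b * sqrt (Px + Py))"
      using P0 ab by (simp add: field_simps real_sqrt_mult[symmetric])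
    also have "\<dots> \<le> (Px + Py) / ?S"
      using S_le S_pos P0 by (intro divide_left_mono) auto
    also have "\<dots> = ?f (t11, t22, t12)" using bf by simp
    also have "\<dots> \<le> (SUP \<tau>\<in>?T. ?f \<tau>)" using sup_ge[OF inT] .
    finally show ?thesis using D by simp
  qed
qed


theorem lemma3p1:
  fixes a b :: real
  assumes "0 < a" and "0 < b"
  shows "\<exists>\<beta>>0. \<forall>nx ny x y vx vy.
           valid_grid a nx x \<longrightarrow> valid_grid b ny y \<longrightarrow>
           (vx, vy) \<in> admissible_displacements nx ny \<longrightarrow>
           (SUP \<tau>\<in>discrete_stresses nx ny - {zero_stress}.
              bform nx ny x y \<tau> (vx, vy) / stress_norm nx ny x y \<tau>)
             \<ge> \<beta> * disp_norm nx ny x y (vx, vy)"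
proof (intro exI[of _ "1 / max a b"] conjI allI impI)
  show "0 < 1 / max a b" using assms by simp
next
  fix nx ny x y vx vy
  assume "valid_grid a nx x" "valid_grid b ny y" "(vx, vy) \<in> admissible_displacements nx ny"
  then show "(SUP \<tau>\<in>discrete_stresses nx ny - {zero_stress}.
              bform nx ny x y \<tau> (vx, vy) / stress_norm nx ny x y \<tau>)
             \<ge> 1 / max a b * disp_norm nx ny x y (vx, vy)"
    by (rule main_fixed)
qed

end
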